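(* There is a constant $C$ (independent of $V$ and $\eta$) such that for all $V$ and all $\eta\ge0$, $$\frac{\sqrt2}{3\pi^2}\big(\eta^{1/2}-CV^{-\alpha_3}\big)^3<F_V(\eta)<\frac{\sqrt2}{3\pi^2}\big(\eta+E_1(V)\big)^{3/2}.$$
   Context: Fix exponents $\alpha_1\ge\alpha_2\ge\alpha_3>0$ with $\alpha_1+\alpha_2+\alpha_3=1$ and $\Lambda_V=\{x\in\mathbb{R}^3:0\le x_j\le V^{\alpha_j}\}$. The Dirichlet Laplacian $-\Delta/2$ on $\Lambda_V$ has eigenvalues $\epsilon_{\mathbf{n},V}=\frac{\pi^2}{2}\sum_{j=1}^3n_j^2V^{-2\alpha_j}$, $n_j\ge1$, listed with multiplicity in increasing order as $E_1(V)<E_2(V)\le\dots$; $\eta_k(V)=E_k(V)-E_1(V)$ and $F_V(\eta)=V^{-1}\#\{k:\eta_k(V)\le\eta\}$. *)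

theory Defs
  imports Complex_Main
begin

definition pos_idx :: "(nat \<times> nat \<times> nat) set" where
  "pos_idx = {(n1, n2, n3). n1 \<ge> 1 \<and> n2 \<ge> 1 \<and> n3 \<ge> 1}"

text \<open>Dirichlet eigenvalue eps_{n,V} of -Delta/2 on the box with sides V^a1, V^a2, V^a3.\<close>
definition eig :: "real \<Rightarrow> real \<Rightarrow> real \<Rightarrow> real \<Rightarrow> nat \<times> nat \<times> nat \<Rightarrow> real" where
  "eig a1 a2 a3 V n = (case n of (n1, n2, n3) \<Rightarrow>
     pi\<^sup>2 / 2 * (real n1 ^ 2 * V powr (-2 * a1) + real n2 ^ 2 * V powr (-2 * a2)
                 + real n3 ^ 2 * V powr (-2 * a3)))"

definition E1 :: "real \<Rightarrow> real \<Rightarrow> real \<Rightarrow> real \<Rightarrow> real" where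
  "E1 a1 a2 a3 V = Inf (eig a1 a2 a3 V ` pos_idx)"

text \<open>F_V(eta) = V^{-1} #{k : E_k(V) - E_1(V) <= eta}, eigenvalues counted with multiplicity,
  i.e. the number of multi-indices n with eps_{n,V} - E_1(V) <= eta.\<close>
definition FV :: "real \<Rightarrow> real \<Rightarrow> real \<Rightarrow> real \<Rightarrow> real \<Rightarrow> real" where
  "FV a1 a2 a3 V \<eta> =
     real (card {n \<in> pos_idx. eig a1 a2 a3 V n - E1 a1 a2 a3 V \<le> \<eta>}) / V"

end

theory Submission
  imports Defs "HOL-Analysis.Analysis"
begin

lemma emeasure_Times3:
  fixes A B C :: "real set"
  assumes "A \<in> sets borel" "B \<in> sets borel" "C \<in> sets borel"
  shows "emeasure (lborel :: (real \<times> real \<times> real) measure) (A \<times> B \<times> C)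
       = emeasure lborel A * emeasure lborel B * emeasure lborel C"
proof -
  have "emeasure (lborel :: (real \<times> real \<times> real) measure) (A \<times> B \<times> C)
      = emeasure (lborel \<Otimes>\<^sub>M (lborel :: (real \<times> real) measure)) (A \<times> B \<times> C)"
    by (simp add: lborel_prod)
  also have "\<dots> = emeasure lborel A * emeasure (lborel :: (real \<times> real) measure) (B \<times> C)"
    using assms by (intro lborel.emeasure_pair_measure_Times) (auto intro: borel_Times)
  also have "emeasure (lborel :: (real \<times> real) measure) (B \<times> C)
      = emeasure (lborel \<Otimes>\<^sub>M (lborel :: real measure)) (B \<times> C)"
    by (simp add: lborel_prod)
  also have "\<dots> = emeasure lborel B * emeasure lborel C"
    using assms by (intro lborel.emeasure_pair_measure_Times) auto
  finally show ?thesis by (simp add: mult.assoc)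
qed

definition Kset :: "real \<Rightarrow> nat \<Rightarrow> real set" where
  "Kset h m = {(real m - 1) * h ..< real m * h} \<union> {- (real m * h) ..< - ((real m - 1) * h)}"

lemma Kset_borel[measurable]: "Kset h m \<in> sets borel"
  unfolding Kset_def by auto

lemma emeasure_two_ivl:
  fixes a b :: real
  assumes "0 \<le> a" "a \<le> b"
  shows "emeasure lborel ({a..<b} \<union> {-b..<-a}) = ennreal (2 * (b - a))"
proof -
  have d: "{a..<b} \<inter> {-b..<-a} = {}" using assms by auto
  have "emeasure lborel ({a..<b} \<union> {-b..<-a}) = emeasure lborel {a..<b} + emeasure lborel {-b..<-a}"
    using d by (intro plus_emeasure[symmetric]) simp_all
  also have "emeasure lborel {a..<b} = ennreal (b - a)" using assms by (intro emeasure_lborel_Ico)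
  also have "emeasure lborel {-b..<-a} = ennreal (-a - -b)" using assms by (intro emeasure_lborel_Ico) simp
  also have "ennreal (b - a) + ennreal (-a - -b) = ennreal ((b - a) + (b - a))"
    using assms by (subst ennreal_plus[symmetric]) auto
  finally show ?thesis by (simp only: mult_2)
qed

lemma emeasure_Kset:
  assumes "h > 0" "m \<ge> 1"
  shows "emeasure lborel (Kset h m) = ennreal (2 * h)"
proof -
  have p: "0 \<le> (real m - 1) * h" using assms by simp
  have q: "(real m - 1) * h \<le> real m * h" using assms by (simp add: algebra_simps)
  have r: "real m * h - (real m - 1) * h = h" by (simp add: algebra_simps)
  show ?thesis unfolding Kset_def by (simp only: emeasure_two_ivl[OF p q] r)
qed

lemma ivl_disj_aux:
  fixes a b a' b' t :: real
  assumes "b \<le> a'" "0 \<le> a" "0 \<le> a'"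
    "t \<in> {a..<b} \<union> {-b..<-a}" "t \<in> {a'..<b'} \<union> {-b'..<-a'}"
  shows False
  using assms by auto

lemma Kset_disj:
  assumes "h > 0" "m \<ge> 1" "m' \<ge> 1" "m \<noteq> m'"
  shows "Kset h m \<inter> Kset h m' = {}"
proof -
  have p: "0 \<le> (real m - 1) * h" "0 \<le> (real m' - 1) * h" using assms by auto
  { fix t assume t: "t \<in> Kset h m" "t \<in> Kset h m'"
    have "m < m' \<or> m' < m" using assms by auto
    hence False
    proof
      assume "m < m'" hence "real m \<le> real m' - 1" by simp
      hence "real m * h \<le> (real m' - 1) * h" using assms by (intro mult_right_mono) auto
      thus False using t p unfolding Kset_def by (intro ivl_disj_aux) 
    next
      assume "m' < m" hence "real m' \<le> real m - 1" by simp
      hence "real m' * h \<le> (real m - 1) * h" using assms by (intro mult_right_mono) auto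
      thus False using t p unfolding Kset_def by (intro ivl_disj_aux[of "real m' * h" "(real m - 1) * h" "(real m' - 1) * h" t "real m * h"]) auto
    qed }
  thus ?thesis by blast
qed

lemma Kset_abs: assumes "t \<in> Kset h m" "h > 0" "m \<ge> 1" shows "\<bar>t\<bar> \<le> real m * h \<and> (real m - 1) * h \<le> \<bar>t\<bar>"
proof -
  have p: "0 \<le> (real m - 1) * h" using assms by simp
  have q: "(real m - 1) * h \<le> real m * h" using assms by (simp add: algebra_simps)
  show ?thesis using assms(1) p q unfolding Kset_def by (auto simp del: of_nat_le_iff)
qed

lemma Kset_cover:
  assumes "h > 0"
  shows "\<exists>m\<ge>1. t \<in> Kset h m \<and> real m * h \<le> \<bar>t\<bar> + h"
proof (cases "t \<ge> 0")
  case True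
  define m where "m = nat (floor (t / h)) + 1"
  have f: "real_of_int (floor (t/h)) \<le> t/h" "t/h < real_of_int (floor (t/h)) + 1" by linarith+
  have "floor (t/h) \<ge> 0" using True assms by simp
  hence rm: "real m = real_of_int (floor (t/h)) + 1" unfolding m_def by simp
  have "(real m - 1) * h \<le> t/h * h" using f rm assms by (intro mult_right_mono) auto
  hence "(real m - 1) * h \<le> t" using assms by simp
  moreover have "t < real m * h" using f rm assms by (simp add: field_simps)
  ultimately have "t \<in> Kset h m" unfolding Kset_def by auto
  moreover have "real m * h \<le> \<bar>t\<bar> + h" using f rm assms True
  proof -
    have "real m * h = (real m - 1)*h + h" by (simp add: algebra_simps)
    thus ?thesis using \<open>(real m - 1) * h \<le> t\<close> True by simp
  qed
  ultimately show ?thesis by (intro exI[of _ m]) (auto simp: m_def)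
next
  case False
  define m where "m = nat (ceiling (-t / h))"
  have f: "-t/h \<le> real_of_int (ceiling (-t/h))" "real_of_int (ceiling (-t/h)) < -t/h + 1" by linarith+
  have "-t/h > 0" using False assms by (intro divide_pos_pos) auto
  hence c1: "ceiling (-t/h) \<ge> 1" by (simp add: one_le_ceiling)
  hence rm: "real m = real_of_int (ceiling (-t/h))" unfolding m_def by simp
  have m1: "m \<ge> 1" using c1 unfolding m_def by linarith
  have g1: "-t/h * h \<le> real m * h" using f(1) rm assms by (intro mult_right_mono) auto
  have g2: "real m * h < (-t/h + 1) * h" using f(2) rm assms by (intro mult_strict_right_mono) auto
  have e1: "-t/h * h = -t" using assms by simp
  have e2: "(-t/h + 1) * h = -t + h" using e1 by (simp only: distrib_right mult_1)
  have e3: "(real m - 1) * h = real m * h - h" by (simp add: algebra_simps)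
  have "-(real m * h) \<le> t" using g1 e1 by linarith
  moreover have "t < -((real m - 1) * h)" using g2 e2 e3 by linarith
  moreover have "real m * h \<le> \<bar>t\<bar> + h" using g2 e2 False by linarith
  ultimately show ?thesis using m1 unfolding Kset_def
    by (intro exI[of _ m]) auto
qed


lemma norm3: "norm (a::real, b::real, c::real) = sqrt (a\<^sup>2 + b\<^sup>2 + c\<^sup>2)"
  by (simp add: norm_Pair add.assoc)

definition ev3 :: "real \<Rightarrow> real \<Rightarrow> real \<Rightarrow> nat \<times> nat \<times> nat \<Rightarrow> real" where
  "ev3 h1 h2 h3 n = (case n of (n1, n2, n3) \<Rightarrow> (real n1 * h1)\<^sup>2 + (real n2 * h2)\<^sup>2 + (real n3 * h3)\<^sup>2)"

definition Sset :: "real \<Rightarrow> real \<Rightarrow> real \<Rightarrow> real \<Rightarrow> (nat \<times> nat \<times> nat) set" where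
  "Sset h1 h2 h3 L = {n \<in> pos_idx. ev3 h1 h2 h3 n \<le> L}"

definition Pbox :: "real \<Rightarrow> real \<Rightarrow> real \<Rightarrow> nat \<times> nat \<times> nat \<Rightarrow> (real \<times> real \<times> real) set" where
  "Pbox h1 h2 h3 n = (case n of (n1, n2, n3) \<Rightarrow> Kset h1 n1 \<times> Kset h2 n2 \<times> Kset h3 n3)"

lemma nat_bound:
  assumes "h > 0" "(real n * h)\<^sup>2 \<le> L"
  shows "n \<le> nat (ceiling (sqrt L / h))"
proof -
  have "real n * h \<le> sqrt L" using assms by (intro real_le_rsqrt) auto
  hence "real n \<le> sqrt L / h" using assms by (simp add: pos_le_divide_eq)
  thus ?thesis by linarith
qed

lemma finite_Sset:
  assumes "h1 > 0" "h2 > 0" "h3 > 0"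
  shows "finite (Sset h1 h2 h3 L)"
proof -
  have "Sset h1 h2 h3 L \<subseteq> {..nat (ceiling (sqrt L / h1))} \<times> {..nat (ceiling (sqrt L / h2))} \<times> {..nat (ceiling (sqrt L / h3))}"
  proof
    fix n assume n: "n \<in> Sset h1 h2 h3 L"
    obtain n1 n2 n3 where nn: "n = (n1, n2, n3)" by (cases n) auto
    have e: "(real n1 * h1)\<^sup>2 + (real n2 * h2)\<^sup>2 + (real n3 * h3)\<^sup>2 \<le> L"
      using n nn by (simp add: Sset_def ev3_def)
    have "(real n1 * h1)\<^sup>2 \<le> L" "(real n2 * h2)\<^sup>2 \<le> L" "(real n3 * h3)\<^sup>2 \<le> L"
      using e by (smt (verit) zero_le_power2)+
    thus "n \<in> {..nat (ceiling (sqrt L / h1))} \<times> {..nat (ceiling (sqrt L / h2))} \<times> {..nat (ceiling (sqrt L / h3))}"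
      using nat_bound assms nn by auto
  qed
  thus ?thesis by (rule finite_subset) auto
qed

lemma Pbox_borel: "Pbox h1 h2 h3 n \<in> sets lborel"
  by (cases n) (auto simp: Pbox_def intro!: borel_Times)

lemma emeasure_Pbox:
  assumes "h1 > 0" "h2 > 0" "h3 > 0" "n \<in> pos_idx"
  shows "emeasure lborel (Pbox h1 h2 h3 n) = ennreal (8 * (h1 * h2 * h3))"
proof -
  obtain n1 n2 n3 where nn: "n = (n1, n2, n3)" by (cases n) auto
  have ge: "n1 \<ge> 1" "n2 \<ge> 1" "n3 \<ge> 1" using assms(4) nn by (auto simp: pos_idx_def)
  have "emeasure lborel (Pbox h1 h2 h3 n) = ennreal (2*h1) * ennreal (2*h2) * ennreal (2*h3)"
    unfolding nn Pbox_def using emeasure_Times3[of "Kset h1 n1" "Kset h2 n2" "Kset h3 n3"]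
      emeasure_Kset assms ge by simp
  also have "\<dots> = ennreal (2*h1 * (2*h2) * (2*h3))"
  proof -
    have a: "ennreal (2*h1*(2*h2)) = ennreal (2*h1) * ennreal (2*h2)"
      by (rule ennreal_mult) (use assms in auto)
    have b: "ennreal (2*h1*(2*h2)*(2*h3)) = ennreal (2*h1*(2*h2)) * ennreal (2*h3)"
      by (rule ennreal_mult) (use assms in auto)
    show ?thesis by (simp only: a b)
  qed
  also have "2*h1 * (2*h2) * (2*h3) = 8 * (h1 * h2 * h3)" by (simp add: algebra_simps)
  finally show ?thesis .
qed

lemma Pbox_disj:
  assumes "h1 > 0" "h2 > 0" "h3 > 0"
  shows "disjoint_family_on (Pbox h1 h2 h3) pos_idx"
  unfolding disjoint_family_on_def
proof (intro ballI impI)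
  fix n n' assume n: "n \<in> pos_idx" "n' \<in> pos_idx" "n \<noteq> n'"
  obtain n1 n2 n3 where nn: "n = (n1, n2, n3)" by (cases n) auto
  obtain m1 m2 m3 where mm: "n' = (m1, m2, m3)" by (cases n') auto
  have ge: "n1 \<ge> 1" "n2 \<ge> 1" "n3 \<ge> 1" "m1 \<ge> 1" "m2 \<ge> 1" "m3 \<ge> 1"
    using n nn mm by (auto simp: pos_idx_def)
  have "n1 \<noteq> m1 \<or> n2 \<noteq> m2 \<or> n3 \<noteq> m3" using n nn mm by auto
  thus "Pbox h1 h2 h3 n \<inter> Pbox h1 h2 h3 n' = {}"
    using Kset_disj[OF assms(1) ge(1) ge(4)] Kset_disj[OF assms(2) ge(2) ge(5)]
      Kset_disj[OF assms(3) ge(3) ge(6)]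
    unfolding nn mm Pbox_def by auto
qed

lemma emeasure_U:
  assumes "h1 > 0" "h2 > 0" "h3 > 0"
  shows "emeasure lborel (\<Union>n\<in>Sset h1 h2 h3 L. Pbox h1 h2 h3 n)
     = ennreal (real (card (Sset h1 h2 h3 L)) * (8 * (h1 * h2 * h3)))"
proof -
  have sub: "Sset h1 h2 h3 L \<subseteq> pos_idx" by (auto simp: Sset_def)
  have "emeasure lborel (\<Union>n\<in>Sset h1 h2 h3 L. Pbox h1 h2 h3 n)
      = (\<Sum>n\<in>Sset h1 h2 h3 L. emeasure lborel (Pbox h1 h2 h3 n))"
    using Pbox_borel disjoint_family_on_mono[OF sub Pbox_disj[OF assms]] finite_Sset[OF assms]
    by (intro sum_emeasure[symmetric]) auto
  also have "\<dots> = (\<Sum>n\<in>Sset h1 h2 h3 L. ennreal (8 * (h1 * h2 * h3)))"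
    using emeasure_Pbox[OF assms] sub by (intro sum.cong) auto
  also have "\<dots> = ennreal (\<Sum>n\<in>Sset h1 h2 h3 L. 8 * (h1 * h2 * h3))"
    using assms by (intro sum_ennreal) auto
  finally show ?thesis by simp
qed


lemma sq_le_of_abs_le: "\<bar>y::real\<bar> \<le> a \<Longrightarrow> y\<^sup>2 \<le> a\<^sup>2"
  by (metis abs_ge_zero power2_abs power_mono)

lemma U_sub_cball:
  assumes "h1 > 0" "h2 > 0" "h3 > 0" "L \<ge> 0"
  shows "(\<Union>n\<in>Sset h1 h2 h3 L. Pbox h1 h2 h3 n) \<subseteq> cball 0 (sqrt L)"
proof
  fix y assume "y \<in> (\<Union>n\<in>Sset h1 h2 h3 L. Pbox h1 h2 h3 n)"
  then obtain n where n: "n \<in> Sset h1 h2 h3 L" "y \<in> Pbox h1 h2 h3 n" by blast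
  obtain n1 n2 n3 where nn: "n = (n1, n2, n3)" by (cases n) auto
  obtain y1 y2 y3 where yy: "y = (y1, y2, y3)" by (cases y) auto
  have ge: "n1 \<ge> 1" "n2 \<ge> 1" "n3 \<ge> 1" using n nn by (auto simp: Sset_def pos_idx_def)
  have e: "(real n1 * h1)\<^sup>2 + (real n2 * h2)\<^sup>2 + (real n3 * h3)\<^sup>2 \<le> L"
    using n nn by (simp add: Sset_def ev3_def)
  have k: "y1 \<in> Kset h1 n1" "y2 \<in> Kset h2 n2" "y3 \<in> Kset h3 n3" using n(2) nn yy by (auto simp: Pbox_def)
  have "y1\<^sup>2 \<le> (real n1 * h1)\<^sup>2" "y2\<^sup>2 \<le> (real n2 * h2)\<^sup>2" "y3\<^sup>2 \<le> (real n3 * h3)\<^sup>2"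
    using Kset_abs[OF k(1) assms(1) ge(1)] Kset_abs[OF k(2) assms(2) ge(2)] Kset_abs[OF k(3) assms(3) ge(3)]
    by (auto intro: sq_le_of_abs_le)
  hence "y1\<^sup>2 + y2\<^sup>2 + y3\<^sup>2 \<le> L" using e by linarith
  thus "y \<in> cball 0 (sqrt L)" by (simp add: yy norm3 dist_norm)
qed

lemma ball_sub_U:
  assumes "h1 > 0" "h2 > 0" "h3 > 0" "r = sqrt L - sqrt (h1\<^sup>2 + h2\<^sup>2 + h3\<^sup>2)"
  shows "ball 0 r \<subseteq> (\<Union>n\<in>Sset h1 h2 h3 L. Pbox h1 h2 h3 n)"
proof
  fix y :: "real \<times> real \<times> real" assume y: "y \<in> ball 0 r"
  obtain y1 y2 y3 where yy: "y = (y1, y2, y3)" by (cases y) auto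
  obtain m1 where m1: "m1 \<ge> 1" "y1 \<in> Kset h1 m1" "real m1 * h1 \<le> \<bar>y1\<bar> + h1" using Kset_cover[OF assms(1)] by blast
  obtain m2 where m2: "m2 \<ge> 1" "y2 \<in> Kset h2 m2" "real m2 * h2 \<le> \<bar>y2\<bar> + h2" using Kset_cover[OF assms(2)] by blast
  obtain m3 where m3: "m3 \<ge> 1" "y3 \<in> Kset h3 m3" "real m3 * h3 \<le> \<bar>y3\<bar> + h3" using Kset_cover[OF assms(3)] by blast
  have ny: "norm y < r" using y by (simp add: dist_norm)
  have "norm ((\<bar>y1\<bar>, \<bar>y2\<bar>, \<bar>y3\<bar>) + (h1, h2, h3)) \<le> norm (\<bar>y1\<bar>, \<bar>y2\<bar>, \<bar>y3\<bar>) + norm (h1, h2, h3)"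
    by (rule norm_triangle_ineq)
  also have "norm (\<bar>y1\<bar>, \<bar>y2\<bar>, \<bar>y3\<bar>) = norm y" by (simp add: yy norm3)
  also have "norm (h1, h2, h3) = sqrt (h1\<^sup>2 + h2\<^sup>2 + h3\<^sup>2)" by (simp add: norm3)
  finally have "norm ((\<bar>y1\<bar>, \<bar>y2\<bar>, \<bar>y3\<bar>) + (h1, h2, h3)) \<le> sqrt L" using ny assms(4) by linarith
  hence "sqrt ((\<bar>y1\<bar> + h1)\<^sup>2 + (\<bar>y2\<bar> + h2)\<^sup>2 + (\<bar>y3\<bar> + h3)\<^sup>2) \<le> sqrt L" by (simp add: norm3)
  hence s: "(\<bar>y1\<bar> + h1)\<^sup>2 + (\<bar>y2\<bar> + h2)\<^sup>2 + (\<bar>y3\<bar> + h3)\<^sup>2 \<le> L" by simp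
  have "(real m1 * h1)\<^sup>2 \<le> (\<bar>y1\<bar> + h1)\<^sup>2" using m1 assms by (intro power_mono) auto
  moreover have "(real m2 * h2)\<^sup>2 \<le> (\<bar>y2\<bar> + h2)\<^sup>2" using m2 assms by (intro power_mono) auto
  moreover have "(real m3 * h3)\<^sup>2 \<le> (\<bar>y3\<bar> + h3)\<^sup>2" using m3 assms by (intro power_mono) auto
  ultimately have "ev3 h1 h2 h3 (m1, m2, m3) \<le> L" using s by (simp add: ev3_def)
  hence "(m1, m2, m3) \<in> Sset h1 h2 h3 L" using m1 m2 m3 by (simp add: Sset_def pos_idx_def)
  moreover have "y \<in> Pbox h1 h2 h3 (m1, m2, m3)" using m1 m2 m3 yy by (simp add: Pbox_def)
  ultimately show "y \<in> (\<Union>n\<in>Sset h1 h2 h3 L. Pbox h1 h2 h3 n)" by blast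
qed

lemma lower_count:
  assumes "h1 > 0" "h2 > 0" "h3 > 0" "r = sqrt L - sqrt (h1\<^sup>2 + h2\<^sup>2 + h3\<^sup>2)" "r \<ge> 0"
  shows "4 / 3 * pi * r ^ 3 \<le> real (card (Sset h1 h2 h3 L)) * (8 * (h1 * h2 * h3))"
proof -
  have "emeasure lborel (ball (0::real \<times> real \<times> real) r) \<le> emeasure lborel (\<Union>n\<in>Sset h1 h2 h3 L. Pbox h1 h2 h3 n)"
    using ball_sub_U[OF assms(1-4)] Pbox_borel by (intro emeasure_mono) auto
  moreover have d: "DIM(real \<times> real \<times> real) = 3" by simp
  moreover have "emeasure lborel (ball (0::real \<times> real \<times> real) r) = ennreal (unit_ball_vol 3 * r ^ 3)"
    using emeasure_ball[OF assms(5), of "0::real \<times> real \<times> real"] by (simp only: d of_nat_numeral)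
  ultimately have "ennreal (unit_ball_vol 3 * r ^ 3) \<le> ennreal (real (card (Sset h1 h2 h3 L)) * (8 * (h1 * h2 * h3)))"
    using emeasure_U[OF assms(1-3), of L] by simp
  hence "unit_ball_vol 3 * r ^ 3 \<le> real (card (Sset h1 h2 h3 L)) * (8 * (h1 * h2 * h3))"
    using assms by (subst (asm) ennreal_le_iff) auto
  thus ?thesis by (simp add: unit_ball_vol_3)
qed


lemma upper_count:
  assumes "h1 > 0" "h2 > 0" "h3 > 0" "h1\<^sup>2 + h2\<^sup>2 + h3\<^sup>2 \<le> L"
  shows "real (card (Sset h1 h2 h3 L)) * (8 * (h1 * h2 * h3)) < 4 / 3 * pi * sqrt L ^ 3"
proof -
  define U where "U = (\<Union>n\<in>Sset h1 h2 h3 L. Pbox h1 h2 h3 n)"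
  define s where "s = sqrt (L - h2\<^sup>2 - h3\<^sup>2)"
  define q where "q = 3 / 4 * (h2\<^sup>2 + h3\<^sup>2)"
  define \<delta> where "\<delta> = sqrt (s\<^sup>2 + q) - s"
  define A where "A = {s<..<s + \<delta>} \<times> {0<..<h2/2} \<times> {0<..<h3/2}"
  have L0: "L \<ge> 0" using assms(4) by (smt (verit) zero_le_power2)
  have Lh: "L - h2\<^sup>2 - h3\<^sup>2 \<ge> 0" using assms(4) zero_le_power2[of h1] by linarith
  hence s0: "s \<ge> 0" unfolding s_def by simp
  from Lh have s2: "s\<^sup>2 = L - h2\<^sup>2 - h3\<^sup>2" unfolding s_def by simp
  have q0: "q > 0" unfolding q_def using assms by (simp add: add_pos_pos)
  have "sqrt (s\<^sup>2) < sqrt (s\<^sup>2 + q)" using q0 by (intro real_sqrt_less_mono) simp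
  hence d0: "\<delta> > 0" unfolding \<delta>_def using s0 by simp
  have sd2: "(s + \<delta>)\<^sup>2 = s\<^sup>2 + q" unfolding \<delta>_def using q0 by simp
  have Ab: "A \<in> sets lborel" unfolding A_def by (auto intro!: borel_Times)
  have Ub: "U \<in> sets lborel" unfolding U_def using Pbox_borel finite_Sset[OF assms(1-3)] by auto
  have disj: "A \<inter> U = {}"
  proof (rule ccontr)
    assume "A \<inter> U \<noteq> {}"
    then obtain y n where y: "y \<in> A" "n \<in> Sset h1 h2 h3 L" "y \<in> Pbox h1 h2 h3 n" unfolding U_def by blast
    obtain n1 n2 n3 where nn: "n = (n1, n2, n3)" by (cases n) auto
    obtain y1 y2 y3 where yy: "y = (y1, y2, y3)" by (cases y) auto
    have ge: "n1 \<ge> 1" "n2 \<ge> 1" "n3 \<ge> 1" using y nn by (auto simp: Sset_def pos_idx_def)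
    have e: "(real n1 * h1)\<^sup>2 + (real n2 * h2)\<^sup>2 + (real n3 * h3)\<^sup>2 \<le> L"
      using y nn by (simp add: Sset_def ev3_def)
    have k: "y1 \<in> Kset h1 n1" using y nn yy by (auto simp: Pbox_def)
    have y1: "s < y1" using y yy by (simp add: A_def)
    have "\<bar>y1\<bar> \<le> real n1 * h1" using Kset_abs[OF k assms(1) ge(1)] by simp
    hence "s < real n1 * h1" using y1 by simp
    hence "s\<^sup>2 < (real n1 * h1)\<^sup>2" using s0 by (intro power_strict_mono) auto
    moreover have "h2\<^sup>2 \<le> (real n2 * h2)\<^sup>2" using ge assms by (intro power_mono) auto
    moreover have "h3\<^sup>2 \<le> (real n3 * h3)\<^sup>2" using ge assms by (intro power_mono) auto
    ultimately show False using e s2 by linarith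
  qed
  have AU: "A \<union> U \<subseteq> cball 0 (sqrt L)"
  proof
    fix y assume "y \<in> A \<union> U"
    thus "y \<in> cball 0 (sqrt L)"
    proof
      assume "y \<in> U" thus ?thesis using U_sub_cball[OF assms(1-3) L0] unfolding U_def by blast
    next
      assume y: "y \<in> A"
      obtain y1 y2 y3 where yy: "y = (y1, y2, y3)" by (cases y) auto
      have "s < y1" "y1 < s + \<delta>" "0 < y2" "y2 < h2/2" "0 < y3" "y3 < h3/2" using y yy by (auto simp: A_def)
      hence "y1\<^sup>2 \<le> (s + \<delta>)\<^sup>2" "y2\<^sup>2 \<le> (h2/2)\<^sup>2" "y3\<^sup>2 \<le> (h3/2)\<^sup>2" using s0
        by (auto intro!: power_mono)
      moreover have "(h2/2)\<^sup>2 = h2\<^sup>2 / 4" "(h3/2)\<^sup>2 = h3\<^sup>2 / 4" by (simp_all add: power_divide)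
      moreover have "3 / 4 * (h2\<^sup>2 + h3\<^sup>2) = 3/4 * h2\<^sup>2 + 3/4 * h3\<^sup>2" by (simp add: distrib_left)
      ultimately have "y1\<^sup>2 + y2\<^sup>2 + y3\<^sup>2 \<le> L" using sd2 s2 unfolding q_def by linarith
      thus ?thesis by (simp add: yy norm3 dist_norm)
    qed
  qed
  have mA: "emeasure lborel A = ennreal (\<delta> * (h2 / 2) * (h3 / 2))"
  proof -
    have "emeasure lborel A = ennreal \<delta> * ennreal (h2/2) * ennreal (h3/2)"
      unfolding A_def using d0 assms by (subst emeasure_Times3) auto
    also have "\<dots> = ennreal (\<delta> * (h2 / 2) * (h3 / 2))"
    proof -
      have a: "ennreal (\<delta> * (h2/2)) = ennreal \<delta> * ennreal (h2/2)"
        by (rule ennreal_mult) (use assms d0 in auto)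
      have b: "ennreal (\<delta> * (h2/2) * (h3/2)) = ennreal (\<delta> * (h2/2)) * ennreal (h3/2)"
        by (rule ennreal_mult) (use assms d0 in auto)
      show ?thesis by (simp only: a b)
    qed
    finally show ?thesis .
  qed
  define N where "N = real (card (Sset h1 h2 h3 L)) * (8 * (h1 * h2 * h3))"
  define a where "a = \<delta> * (h2 / 2) * (h3 / 2)"
  have a0: "a > 0" unfolding a_def using d0 assms by simp
  have N0: "N \<ge> 0" unfolding N_def using assms by simp
  have d: "DIM(real \<times> real \<times> real) = 3" by simp
  have cb: "emeasure lborel (cball (0::real \<times> real \<times> real) (sqrt L)) = ennreal (unit_ball_vol 3 * sqrt L ^ 3)"
    using emeasure_cball[of "sqrt L" "0::real \<times> real \<times> real"] L0 by (simp only: d of_nat_numeral real_sqrt_ge_zero)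
  have "emeasure lborel (A \<union> U) = emeasure lborel A + emeasure lborel U"
    using Ab Ub disj by (intro plus_emeasure[symmetric]) auto
  also have "\<dots> = ennreal a + ennreal N" unfolding U_def a_def N_def using mA emeasure_U[OF assms(1-3)] by simp
  also have "\<dots> = ennreal (a + N)" using a0 N0 by (intro ennreal_plus[symmetric]) auto
  finally have "ennreal (a + N) \<le> ennreal (unit_ball_vol 3 * sqrt L ^ 3)"
    using emeasure_mono[OF AU, of lborel] cb by simp
  hence "a + N \<le> unit_ball_vol 3 * sqrt L ^ 3"
    using a0 N0 L0 by (subst (asm) ennreal_le_iff) auto
  hence "N < unit_ball_vol 3 * sqrt L ^ 3" using a0 by linarith
  thus ?thesis unfolding N_def by (simp add: unit_ball_vol_3)
qed


lemma powr_sq: "(V powr x)\<^sup>2 = V powr (2 * x)" for V x :: real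
  by (simp only: power2_eq_square powr_add[symmetric] mult_2)

lemma hsq: "(pi / sqrt 2 * V powr (- a))\<^sup>2 = pi\<^sup>2 / 2 * V powr (-2 * a)"
proof -
  have "(pi / sqrt 2 * V powr (- a))\<^sup>2 = (pi / sqrt 2)\<^sup>2 * (V powr (- a))\<^sup>2"
    by (rule power_mult_distrib)
  also have "(pi / sqrt 2)\<^sup>2 = pi\<^sup>2 / 2" by (simp add: power_divide)
  also have "(V powr (- a))\<^sup>2 = V powr (-2 * a)" by (simp only: powr_sq) simp
  finally show ?thesis .
qed

lemma term_sq: "(real n * (pi / sqrt 2 * V powr (- a)))\<^sup>2 = real n ^ 2 * (pi\<^sup>2 / 2 * V powr (-2 * a))"
  by (simp only: power_mult_distrib[of "real n"] hsq)

lemma eig_ev3: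
  "eig a1 a2 a3 V n = ev3 (pi / sqrt 2 * V powr (- a1)) (pi / sqrt 2 * V powr (- a2)) (pi / sqrt 2 * V powr (- a3)) n"
proof -
  obtain n1 n2 n3 where nn: "n = (n1, n2, n3)" by (cases n) auto
  show ?thesis unfolding nn eig_def ev3_def prod.case term_sq by (simp only: distrib_left mult.assoc mult.left_commute)
qed

lemma ev3_mono:
  assumes "n \<in> pos_idx"
  shows "ev3 h1 h2 h3 (1,1,1) \<le> ev3 h1 h2 h3 n"
proof -
  obtain n1 n2 n3 where nn: "n = (n1, n2, n3)" by (cases n) auto
  have ge: "real n1 \<ge> 1" "real n2 \<ge> 1" "real n3 \<ge> 1" using assms nn by (auto simp: pos_idx_def)
  have k: "h\<^sup>2 \<le> (x * h)\<^sup>2" if "x \<ge> 1" for x h :: real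
  proof -
    have "1 * h\<^sup>2 \<le> x\<^sup>2 * h\<^sup>2" using that by (intro mult_right_mono) (auto simp: one_le_power)
    thus ?thesis by (simp add: power_mult_distrib)
  qed
  have "h1\<^sup>2 \<le> (real n1 * h1)\<^sup>2" "h2\<^sup>2 \<le> (real n2 * h2)\<^sup>2" "h3\<^sup>2 \<le> (real n3 * h3)\<^sup>2"
    using ge k by blast+
  moreover have "ev3 h1 h2 h3 (1,1,1) = h1\<^sup>2 + h2\<^sup>2 + h3\<^sup>2" by (simp add: ev3_def)
  moreover have "ev3 h1 h2 h3 n = (real n1 * h1)\<^sup>2 + (real n2 * h2)\<^sup>2 + (real n3 * h3)\<^sup>2" by (simp add: ev3_def nn)
  ultimately show ?thesis by linarith
qed

lemma E1_eq:
  "E1 a1 a2 a3 V = ev3 (pi / sqrt 2 * V powr (- a1)) (pi / sqrt 2 * V powr (- a2)) (pi / sqrt 2 * V powr (- a3)) (1,1,1)"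
  unfolding E1_def eig_ev3
proof (rule cInf_eq_minimum)
  show "ev3 (pi / sqrt 2 * V powr - a1) (pi / sqrt 2 * V powr - a2) (pi / sqrt 2 * V powr - a3) (1, 1, 1)
    \<in> ev3 (pi / sqrt 2 * V powr - a1) (pi / sqrt 2 * V powr - a2) (pi / sqrt 2 * V powr - a3) ` pos_idx"
    by (rule imageI) (simp add: pos_idx_def)
next
  fix x assume "x \<in> ev3 (pi / sqrt 2 * V powr - a1) (pi / sqrt 2 * V powr - a2) (pi / sqrt 2 * V powr - a3) ` pos_idx"
  then obtain n where "n \<in> pos_idx" "x = ev3 (pi / sqrt 2 * V powr - a1) (pi / sqrt 2 * V powr - a2) (pi / sqrt 2 * V powr - a3) n" by blast
  thus "ev3 (pi / sqrt 2 * V powr - a1) (pi / sqrt 2 * V powr - a2) (pi / sqrt 2 * V powr - a3) (1, 1, 1) \<le> x"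
    using ev3_mono by blast
qed

lemma powr_three_halves: "L \<ge> 0 \<Longrightarrow> L powr (3/2) = sqrt L ^ 3" for L :: real
proof -
  assume L: "L \<ge> 0"
  show ?thesis
  proof (cases "L = 0")
    case True thus ?thesis by simp
  next
    case False
    hence L': "L > 0" using L by simp
    have "sqrt L ^ 3 = (L powr (1/2)) ^ 3" using L by (simp add: powr_half_sqrt)
    also have "\<dots> = L powr (1/2 * 3)" using L' by (simp add: powr_realpow[symmetric] powr_powr)
    finally show ?thesis by simp
  qed
qed


theorem lemma3p4:
  fixes a1 a2 a3 :: real
  assumes "a1 \<ge> a2" "a2 \<ge> a3" "a3 > 0" "a1 + a2 + a3 = 1"
  shows "\<exists>C::real. \<forall>V::real. \<forall>\<eta>::real. V \<ge> 1 \<and> \<eta> \<ge> 0 \<longrightarrow>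
    sqrt 2 / (3 * pi\<^sup>2) * (sqrt \<eta> - C * V powr (- a3)) ^ 3 < FV a1 a2 a3 V \<eta> \<and>
    FV a1 a2 a3 V \<eta> < sqrt 2 / (3 * pi\<^sup>2) * (\<eta> + E1 a1 a2 a3 V) powr (3 / 2)"
proof (intro exI allI impI)
  define D where "D = pi * sqrt (3 / 2)"
  fix V \<eta> :: real
  assume V\<eta>: "V \<ge> 1 \<and> \<eta> \<ge> 0"
  hence V1: "V \<ge> 1" and e0: "\<eta> \<ge> 0" by auto
  define h1 where "h1 = pi / sqrt 2 * V powr (- a1)"
  define h2 where "h2 = pi / sqrt 2 * V powr (- a2)"
  define h3 where "h3 = pi / sqrt 2 * V powr (- a3)"
  have hp: "h1 > 0" "h2 > 0" "h3 > 0" using V1 unfolding h1_def h2_def h3_def by auto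
  define E where "E = E1 a1 a2 a3 V"
  have E: "E = h1\<^sup>2 + h2\<^sup>2 + h3\<^sup>2" unfolding E_def E1_eq h1_def h2_def h3_def by (simp add: ev3_def)
  have Ep: "E > 0" unfolding E using hp by (simp add: add_pos_pos)
  define L where "L = \<eta> + E"
  have L0: "L \<ge> 0" "L > 0" using e0 Ep unfolding L_def by auto
  have setEq: "{n \<in> pos_idx. eig a1 a2 a3 V n - E1 a1 a2 a3 V \<le> \<eta>} = Sset h1 h2 h3 L"
    unfolding Sset_def L_def E_def[symmetric] eig_ev3 h1_def[symmetric] h2_def[symmetric] h3_def[symmetric]
    by auto
  define N where "N = real (card (Sset h1 h2 h3 L))"
  have FVeq: "FV a1 a2 a3 V \<eta> = N / V" unfolding FV_def setEq N_def by simp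
  have in1: "(1,1,1) \<in> Sset h1 h2 h3 L"
    using L0 e0 unfolding Sset_def L_def E by (simp add: pos_idx_def ev3_def)
  have N1: "N \<ge> 1"
  proof -
    have "card (Sset h1 h2 h3 L) \<noteq> 0" using in1 finite_Sset[OF hp] by auto
    thus ?thesis unfolding N_def by simp
  qed
  define K where "K = 8 * (h1 * h2 * h3)"
  have KV: "K * V = 2 * sqrt 2 * pi ^ 3"
  proof -
    have "V powr (- a1) * V powr (- a2) * V powr (- a3) * V = V powr (- (a1 + a2 + a3)) * V powr 1"
      using V1 by (simp add: powr_add[symmetric] algebra_simps)
    also have "\<dots> = 1" using assms(4) V1 by (simp add: powr_add[symmetric])
    finally have p: "V powr (- a1) * V powr (- a2) * V powr (- a3) * V = 1" .
    have "K * V = 8 * (pi / sqrt 2) ^ 3 * (V powr (- a1) * V powr (- a2) * V powr (- a3) * V)"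
      unfolding K_def h1_def h2_def h3_def by (simp add: power3_eq_cube algebra_simps)
    also have "\<dots> = 8 * (pi / sqrt 2) ^ 3" using p by simp
    also have "(pi / sqrt 2) ^ 3 = pi ^ 3 / (2 * sqrt 2)"
      by (simp add: power_divide power3_eq_cube)
    finally have a: "K * V = 8 * (pi ^ 3 / (2 * sqrt 2))" .
    have b: "2 * sqrt 2 * pi ^ 3 * (2 * sqrt 2) = 8 * pi ^ 3"
    proof -
      have "2 * sqrt 2 * pi ^ 3 * (2 * sqrt 2) = 4 * (sqrt 2 * sqrt 2) * pi ^ 3" by (simp only: mult_ac)
      also have "sqrt 2 * sqrt 2 = 2" by simp
      finally show ?thesis by simp
    qed
    have "8 * (pi ^ 3 / (2 * sqrt 2)) = 2 * sqrt 2 * pi ^ 3"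
      using b by (simp add: divide_eq_eq)
    thus ?thesis using a by simp
  qed
  have Kp: "K > 0" unfolding K_def using hp by simp
  have Vp: "V > 0" using V1 by simp
  have FVK: "FV a1 a2 a3 V \<eta> = N * K / (2 * sqrt 2 * pi ^ 3)"
    unfolding FVeq KV[symmetric] using Kp Vp by simp
  have coef: "4 / 3 * pi * X / (2 * sqrt 2 * pi ^ 3) = sqrt 2 / (3 * pi\<^sup>2) * X" for X :: real
  proof -
    have s2: "sqrt 2 * sqrt 2 = 2" by simp
    show ?thesis by (simp add: field_simps power2_eq_square power3_eq_cube)
  qed
  have cpos: "2 * sqrt 2 * pi ^ 3 > 0" by simp
  have up: "N * K < 4 / 3 * pi * sqrt L ^ 3"
    using upper_count[OF hp] L0 e0 unfolding N_def K_def L_def E by simp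
  have upper: "FV a1 a2 a3 V \<eta> < sqrt 2 / (3 * pi\<^sup>2) * (\<eta> + E1 a1 a2 a3 V) powr (3 / 2)"
  proof -
    have "FV a1 a2 a3 V \<eta> < 4 / 3 * pi * sqrt L ^ 3 / (2 * sqrt 2 * pi ^ 3)"
      unfolding FVK by (rule divide_strict_right_mono[OF up cpos])
    also have "\<dots> = sqrt 2 / (3 * pi\<^sup>2) * L powr (3 / 2)"
      by (simp only: coef powr_three_halves[OF L0(1)])
    finally show ?thesis unfolding L_def E_def .
  qed
  have hb: "h\<^sup>2 \<le> pi\<^sup>2 / 2 * V powr (-2 * a3)" if "h = pi / sqrt 2 * V powr (- a)" "a \<ge> a3" for h a
  proof -
    have "V powr (-2 * a) \<le> V powr (-2 * a3)" using that V1 by (intro powr_mono) auto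
    thus ?thesis unfolding that hsq by (intro mult_left_mono) auto
  qed
  have "E \<le> 3 * (pi\<^sup>2 / 2 * V powr (-2 * a3))"
    using hb[OF h1_def] hb[OF h2_def] hb[OF h3_def] assms unfolding E by linarith
  also have "\<dots> = (D * V powr (- a3))\<^sup>2"
  proof -
    have "(D * V powr (- a3))\<^sup>2 = D\<^sup>2 * (V powr (- a3))\<^sup>2" by (rule power_mult_distrib)
    also have "(V powr (- a3))\<^sup>2 = V powr (-2 * a3)" by (simp only: powr_sq) simp
    also have "D\<^sup>2 = pi\<^sup>2 * 3 / 2" unfolding D_def by (simp add: power_mult_distrib)
    finally show ?thesis by simp
  qed
  finally have Eb: "E \<le> (D * V powr (- a3))\<^sup>2" .
  have Z: "0 \<le> D * V powr (- a3)" unfolding D_def by simp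
  have "sqrt E \<le> sqrt ((D * V powr (- a3))\<^sup>2)" using Eb by (rule real_sqrt_le_mono)
  also have "\<dots> = D * V powr (- a3)" using Z by simp
  finally have "sqrt E \<le> D * V powr (- a3)" .
  hence sE: "sqrt E \<le> D * V powr (- a3)" .
  have lower: "sqrt 2 / (3 * pi\<^sup>2) * (sqrt \<eta> - D * V powr (- a3)) ^ 3 < FV a1 a2 a3 V \<eta>"
  proof (cases "sqrt \<eta> - D * V powr (- a3) \<le> 0")
    case True
    hence p3: "(sqrt \<eta> - D * V powr (- a3)) ^ 3 \<le> 0" by (simp add: power_le_zero_eq)
    have "sqrt 2 / (3 * pi\<^sup>2) \<ge> 0" by simp
    hence "sqrt 2 / (3 * pi\<^sup>2) * (sqrt \<eta> - D * V powr (- a3)) ^ 3 \<le> 0"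
      using p3 by (rule mult_nonneg_nonpos)
    moreover have "FV a1 a2 a3 V \<eta> > 0" unfolding FVeq using N1 Vp by simp
    ultimately show ?thesis by linarith
  next
    case False
    define r where "r = sqrt L - sqrt (h1\<^sup>2 + h2\<^sup>2 + h3\<^sup>2)"
    have "\<eta> < L" unfolding L_def using Ep by simp
    hence "sqrt \<eta> < sqrt L" by (rule real_sqrt_less_mono)
    moreover have "sqrt (h1\<^sup>2 + h2\<^sup>2 + h3\<^sup>2) \<le> D * V powr (- a3)" using sE unfolding E .
    ultimately have rgt: "sqrt \<eta> - D * V powr (- a3) < r" unfolding r_def by linarith
    have r0: "r \<ge> 0" using rgt False by simp
    have lc: "4 / 3 * pi * r ^ 3 \<le> N * K"
      using lower_count[OF hp r_def r0] unfolding N_def K_def .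
    have "(sqrt \<eta> - D * V powr (- a3)) ^ 3 < r ^ 3"
      using rgt False by (intro power_strict_mono) auto
    hence "sqrt 2 / (3 * pi\<^sup>2) * (sqrt \<eta> - D * V powr (- a3)) ^ 3 < sqrt 2 / (3 * pi\<^sup>2) * r ^ 3"
      by (rule mult_strict_left_mono) simp
    also have "\<dots> = 4 / 3 * pi * r ^ 3 / (2 * sqrt 2 * pi ^ 3)" by (simp only: coef)
    also have "\<dots> \<le> N * K / (2 * sqrt 2 * pi ^ 3)" using cpos by (intro divide_right_mono[OF lc]) simp
    finally show ?thesis unfolding FVK .
  qed
  show "sqrt 2 / (3 * pi\<^sup>2) * (sqrt \<eta> - D * V powr (- a3)) ^ 3 < FV a1 a2 a3 V \<eta> \<and>
    FV a1 a2 a3 V \<eta> < sqrt 2 / (3 * pi\<^sup>2) * (\<eta> + E1 a1 a2 a3 V) powr (3 / 2)"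
    using lower upper by blast
qed

end
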